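(* For $T>0$ and $x\in[0,1]$ let $$I(x) = \frac{2x}{\pi}\int_{-T}^{T}\frac{e^s}{e^{2s}+x}\,ds.$$ Then for every $T>0$ and every $x\in[0,1]$, $$|\sqrt{x}-I(x)| < \frac{4}{\pi}e^{-T} < \frac32 e^{-T}.$$ *)

theory Defs
  imports "HOL-Analysis.Analysis"
begin

definition I_approx :: "real \<Rightarrow> real \<Rightarrow> real" where
  "I_approx T x = (2 * x / pi) * integral {-T..T} (\<lambda>s. exp s / (exp (2 * s) + x))"

end

theory Submission
  imports Defs
begin

lemma arctan_lt_self: assumes "0 < y" "y < 1" shows "arctan y < y"
proof -
  have "arctan y \<le> (\<Sum>k<2 * 1 + 1. (- 1) ^ k * (1 / real (k * 2 + 1) * y ^ (k * 2 + 1)))"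
    by (rule arctan_upper_bound) (use assms in auto)
  also have "\<dots> = y - y^3/3 + y^5/5" by (simp add: numeral_3_eq_3 eval_nat_numeral)
  also have "\<dots> < y"
  proof -
    have "y^5 \<le> y^3" using assms by (intro power_decreasing) auto
    moreover have "0 < y^3" using assms by simp
    ultimately show ?thesis by linarith
  qed
  finally show ?thesis .
qed

lemma integral_eq:
  fixes T x :: real
  assumes "T > 0" and "0 < x"
  shows "integral {-T..T} (\<lambda>s. exp s / (exp (2 * s) + x))
     = (arctan (exp T / sqrt x) - arctan (exp (-T) / sqrt x)) / sqrt x"
proof -
  let ?F = "\<lambda>s. arctan (exp s / sqrt x) / sqrt x"
  have "((\<lambda>s. exp s / (exp (2 * s) + x)) has_integral (?F T - ?F (-T))) {-T..T}"
  proof (rule fundamental_theorem_of_calculus)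
    show "-T \<le> T" using assms by simp
  next
    fix s assume "s \<in> {-T..T}"
    have sx: "sqrt x > 0" "sqrt x ^ 2 = x" using assms by auto
    have e2: "exp (2 * s) = (exp s)\<^sup>2" by (simp add: power2_eq_square exp_add[symmetric])
    have "(?F has_real_derivative (inverse (1 + (exp s / sqrt x)\<^sup>2) * (exp s / sqrt x) / sqrt x)) (at s)"
    proof -
      have d1: "((\<lambda>s. exp s / sqrt x) has_real_derivative exp s / sqrt x) (at s)"
        by (rule DERIV_cdivide[OF DERIV_exp])
      show ?thesis using DERIV_cdivide[OF DERIV_chain2[OF DERIV_arctan d1], of "sqrt x"]
        by (simp add: divide_inverse mult.assoc)
    qed
    moreover have "inverse (1 + (exp s / sqrt x)\<^sup>2) * (exp s / sqrt x) / sqrt x = exp s / (exp (2 * s) + x)"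
    proof -
      have g: "inverse (1 + (a / r)\<^sup>2) * (a / r) / r = a / (a\<^sup>2 + r\<^sup>2)" if "r > 0" for a r :: real
      proof -
        have p: "a\<^sup>2 + r\<^sup>2 > 0" using that by (simp add: add_nonneg_pos)
        have "inverse (1 + (a / r)\<^sup>2) = r\<^sup>2 / (a\<^sup>2 + r\<^sup>2)"
          using that p by (simp add: field_simps power_divide)
        moreover have "r\<^sup>2 / (a\<^sup>2 + r\<^sup>2) * (a / r) / r = a / (a\<^sup>2 + r\<^sup>2)"
          using that by (simp add: power2_eq_square)
        ultimately show ?thesis by simp
      qed
      show ?thesis using g[OF sx(1), of "exp s"] sx(2) e2 by (simp add: add.commute)
    qed
    ultimately show "(?F has_vector_derivative exp s / (exp (2 * s) + x)) (at s within {-T..T})"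
      by (metis has_real_derivative_iff_has_vector_derivative has_field_derivative_at_within)
  qed
  then show ?thesis by (simp add: integral_unique diff_divide_distrib)
qed

theorem lemmaA1:
  fixes T x :: real
  assumes "T > 0" and "0 \<le> x" and "x \<le> 1"
  shows "\<bar>sqrt x - I_approx T x\<bar> < (4 / pi) * exp (- T)
         \<and> (4 / pi) * exp (- T) < (3 / 2) * exp (- T)"
proof
  have pi3: "pi > 3" using pi_gt3 .
  show "(4 / pi) * exp (- T) < (3 / 2) * exp (- T)"
    using pi3 by (simp add: field_simps)
  show "\<bar>sqrt x - I_approx T x\<bar> < (4 / pi) * exp (- T)"
  proof (cases "x = 0")
    case True then show ?thesis by (simp add: I_approx_def)
  next
    case False
    hence xp: "x > 0" using assms by simp
    define r where "r = sqrt x"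
    define e where "e = exp (-T)"
    have rp: "r > 0" and rr: "r * r = x" and r1: "r \<le> 1" using xp assms by (auto simp: r_def)
    have ep: "e > 0" and e1: "e < 1" using assms by (auto simp: e_def)
    have eT: "exp T = inverse e" by (simp add: e_def exp_minus)
    have a1: "arctan (exp T / r) = pi/2 - arctan (e * r)"
      using arctan_inverse[of "e*r"] rp ep by (simp add: eT field_simps)
    have int: "integral {-T..T} (\<lambda>s. exp s / (exp (2 * s) + x)) = (pi/2 - arctan (e * r) - arctan (e / r)) / r"
      using integral_eq[OF assms(1) xp] by (simp add: a1 flip: r_def e_def)
    have I: "I_approx T x = (2 * r / pi) * (pi/2 - arctan (e * r) - arctan (e / r))"
      unfolding I_approx_def int using rp rr[symmetric] by (simp add: field_simps)
    have D: "sqrt x - I_approx T x = (2/pi) * (r * arctan (e*r) + r * arctan (e/r))"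
      unfolding I using pi3 by (simp add: r_def[symmetric] field_simps)
    have nn: "0 \<le> r * arctan (e*r) + r * arctan (e/r)" using rp ep by simp
    have "r * arctan (e*r) + r * arctan (e/r) < 2 * e"
    proof (cases "x < 1")
      case True
      hence rl: "r < 1" using rr rp r1 by (auto simp: r_def)
      have "r * arctan (e*r) \<le> r * (e*r)" using rp ep arctan_le_self[of "e*r"] by (intro mult_left_mono) auto
      moreover have "r * arctan (e/r) \<le> r * (e/r)" using rp ep arctan_le_self[of "e/r"] by (intro mult_left_mono) auto
      moreover have "r*(e*r) < e" using rl rp ep rr True by (simp add: mult.assoc mult.left_commute)
      moreover have "r * (e / r) = e" using rp by simp
      ultimately show ?thesis by linarith
    next
      case False
      hence "r = 1" using assms rr rp r_def by auto
      then show ?thesis using arctan_lt_self[OF ep e1] by simp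
    qed
    then have "(2/pi) * (r * arctan (e*r) + r * arctan (e/r)) < (2/pi) * (2 * e)"
      using pi3 by (intro mult_strict_left_mono) auto
    then have "sqrt x - I_approx T x < (4/pi) * e" unfolding D by simp
    moreover have "0 \<le> sqrt x - I_approx T x" unfolding D using nn pi3 by simp
    ultimately show ?thesis by (simp add: e_def)
  qed
qed

end
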